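(* If an $n$-Brinkhuis triple pair exists, then $s\ge 2^{1/(n-1)}$.
   Context: Let $\Sigma=\{0,1,2\}$. A word over $\Sigma$ is square-free if it cannot be written as $xyyz$ with $y$ nonempty. $\mathcal{A}(n)$ is the set of square-free words of length $n$ over $\Sigma$, $a(n)=|\mathcal{A}(n)|$, and $s=\lim_{n\to\infty}a(n)^{1/n}$ (this limit exists). An $n$-Brinkhuis triple pair consists of three sets $\mathcal{B}^{(0)},\mathcal{B}^{(1)},\mathcal{B}^{(2)}\subset\mathcal{A}(n)$. Each $\mathcal{B}^{(i)}=\{U^{(i)},V^{(i)}\}$ has two distinct square-free words of length $n$. The defining condition: for every square-free word $w_1w_2w_3\in\mathcal{A}(3)$ and every choice $W_j\in\mathcal{B}^{(w_j)}$ for $j=1,2,3$, the concatenation $W_1W_2W_3$ (of length $3n$) is square-free. *)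

theory Defs
  imports Complex_Main
begin

definition square_free :: "nat list \<Rightarrow> bool" where
  "square_free w \<longleftrightarrow> \<not> (\<exists>x y z. y \<noteq> [] \<and> w = x @ y @ y @ z)"

definition sf_words :: "nat \<Rightarrow> nat list set" where
  "sf_words n = {w. length w = n \<and> set w \<subseteq> {0,1,2} \<and> square_free w}"

definition sf_count :: "nat \<Rightarrow> nat" where
  "sf_count n = card (sf_words n)"

text \<open>The growth rate s = lim a(n)^(1/n) (the limit exists).\<close>
definition sf_growth :: real where
  "sf_growth = lim (\<lambda>n. real (sf_count n) powr (1 / real n))"

definition brinkhuis_triple_pair :: "nat \<Rightarrow> (nat \<Rightarrow> nat list set) \<Rightarrow> bool" where
  "brinkhuis_triple_pair n B \<longleftrightarrow>
     (\<forall>i\<in>{0,1,2::nat}. B i \<subseteq> sf_words n \<and> card (B i) = 2) \<and>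
     (\<forall>w\<in>sf_words 3. \<forall>W1\<in>B (w ! 0). \<forall>W2\<in>B (w ! 1). \<forall>W3\<in>B (w ! 2).
         square_free (W1 @ W2 @ W3))"

end

theory Submission
  imports Defs
begin
definition sqpos :: "nat list \<Rightarrow> nat \<Rightarrow> nat \<Rightarrow> bool" where
  "sqpos w p L \<longleftrightarrow> 0 < L \<and> p + 2*L \<le> length w \<and> (\<forall>i<L. w!(p+i) = w!(p+L+i))"

lemma sqpos_not_sf: assumes "sqpos w p L" shows "\<not> square_free w"
proof -
  have L: "0 < L" "p + 2*L \<le> length w" and eq: "\<forall>i<L. w!(p+i) = w!(p+L+i)"
    using assms by (auto simp: sqpos_def)
  define y where "y = take L (drop p w)"
  have y2: "take L (drop (p+L) w) = y"
    unfolding y_def by (rule nth_equalityI) (use L eq in \<open>auto simp: add.assoc\<close>)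
  have "w = take p w @ take L (drop p w) @ take L (drop (p+L) w) @ drop (p+2*L) w"
  proof -
    have "take p w @ take L (drop p w) = take (p+L) w" by (simp add: take_add)
    moreover have "take (p+L) w @ take L (drop (p+L) w) = take (p+2*L) w"
    proof -
      have "p+2*L = (p+L)+L" by simp
      then show ?thesis by (simp only: take_add)
    qed
    ultimately have "take p w @ take L (drop p w) @ take L (drop (p+L) w) = take (p+2*L) w" by (metis append.assoc)
    then show ?thesis by (metis append_take_drop_id append.assoc)
  qed
  then have "w = take p w @ y @ y @ drop (p+2*L) w" using y2 y_def by simp
  moreover have "y \<noteq> []" using L by (simp add: y_def)
  ultimately show ?thesis unfolding square_free_def by blast
qed

lemma not_sf_sqpos: assumes "\<not> square_free w" shows "\<exists>p L. sqpos w p L"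
proof -
  obtain x y z where h: "y \<noteq> []" "w = x @ y @ y @ z" using assms unfolding square_free_def by blast
  have "sqpos w (length x) (length y)"
    unfolding sqpos_def using h by (auto simp: nth_append)
  then show ?thesis by blast
qed

lemma sf_iff: "square_free w \<longleftrightarrow> (\<forall>p L. \<not> sqpos w p L)"
  using sqpos_not_sf not_sf_sqpos by blast

lemma sf3: assumes "a \<in> {0,1,2}" "b \<in> {0,1,2}" "c \<in> {0,1,2::nat}" "a \<noteq> b" "b \<noteq> c"
  shows "[a,b,c] \<in> sf_words 3"
proof -
  have "\<not> sqpos [a,b,c] p L" for p L
  proof
    assume s: "sqpos [a,b,c] p L"
    then have "L = 1" "p \<le> 1" by (auto simp: sqpos_def)
    then have "p = 0 \<or> p = 1" by auto
    with s \<open>L = 1\<close> show False using assms by (auto simp: sqpos_def)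
  qed
  then show ?thesis using assms by (auto simp: sf_words_def sf_iff)
qed

lemma concat_len: "(\<forall>j<m. length (W j) = n) \<Longrightarrow> length (concat (map W [0..<m])) = m*n"
  by (induction m) auto

lemma concat_nth: "(\<forall>j<m. length (W j) = n) \<Longrightarrow> j < m \<Longrightarrow> i < n \<Longrightarrow>
   concat (map W [0..<m]) ! (j*n+i) = W j ! i"
proof (induction m)
  case 0 then show ?case by simp
next
  case (Suc m)
  have len: "length (concat (map W [0..<m])) = m*n" using Suc.prems(1) by (intro concat_len) auto
  show ?case
  proof (cases "j < m")
    case True
    then have "(j+1)*n \<le> m*n" by (intro mult_le_mono1) simp
    then have "j*n + i < m*n" using Suc.prems(3) by simp
    then show ?thesis using Suc True by (simp add: nth_append len)
  next
    case False
    then have "j = m" using Suc by simp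
    then show ?thesis using len by (simp add: nth_append)
  qed
qed

context fixes n B assumes bt: "brinkhuis_triple_pair n B"
begin

lemma bt_sub: "i \<in> {0,1,2} \<Longrightarrow> Z \<in> B i \<Longrightarrow> length Z = n \<and> set Z \<subseteq> {0,1,2} \<and> square_free Z"
  using bt unfolding brinkhuis_triple_pair_def sf_words_def by blast

lemma bt_card: "i \<in> {0,1,2} \<Longrightarrow> card (B i) = 2"
  using bt unfolding brinkhuis_triple_pair_def by blast

lemma bt_tri: "[a,b,c] \<in> sf_words 3 \<Longrightarrow> X \<in> B a \<Longrightarrow> Y \<in> B b \<Longrightarrow> Z \<in> B c \<Longrightarrow> square_free (X@Y@Z)"
  using bt unfolding brinkhuis_triple_pair_def by fastforce

lemma bt_ne: "i \<in> {0,1,2} \<Longrightarrow> \<exists>Z. Z \<in> B i"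
  using bt_card by (metis card.empty ex_in_conv zero_neq_numeral)

lemma n_pos: "0 < n"
proof (rule ccontr)
  assume "\<not> 0 < n"
  then have "n = 0" by simp
  have "B 0 \<subseteq> {[]}" using bt_sub[of 0] \<open>n = 0\<close> by auto
  then have "card (B 0) \<le> card {[]::nat list}" by (intro card_mono) auto
  then have "card (B 0) \<le> 1" by simp
  then show False using bt_card[of 0] by simp
qed

lemma disj: assumes "a \<in> {0,1,2}" "b \<in> {0,1,2}" "a \<noteq> b" "Z \<in> B a" "Z \<in> B b" shows False
proof -
  have "[a,b,a] \<in> sf_words 3" using assms by (intro sf3) auto
  then have "square_free (Z@Z@Z)" using bt_tri assms by blast
  moreover have "length Z = n" using bt_sub assms by blast
  then have "sqpos (Z@Z@Z) 0 n" using n_pos by (auto simp: sqpos_def nth_append)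
  ultimately show False using sf_iff by blast
qed

lemma sync: assumes abc: "a \<in> {0,1,2}" "b \<in> {0,1,2}" "c \<in> {0,1,2}" "b \<noteq> c"
  and Z: "Z \<in> B a" and X: "X \<in> B b" and Y: "Y \<in> B c" and t: "0 < t" "t < n"
  and eq: "\<forall>i<n. Z!i = (X@Y)!(t+i)"
shows False
proof -
  have lZ: "length Z = n" and lX: "length X = n" and lY: "length Y = n"
    using bt_sub abc Z X Y by blast+
  show False
  proof (cases "a = c")
    case False
    have "[a,c,a] \<in> sf_words 3" using abc False by (intro sf3) auto
    then have sf: "square_free (Z@Y@Z)" using bt_tri Z Y by blast
    have "sqpos (Z@Y@Z) (n-t) t"
      unfolding sqpos_def
    proof (intro conjI allI impI)
      show "0 < t" by fact
      show "n - t + 2 * t \<le> length (Z @ Y @ Z)" using lZ lY t by simp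
    next
      fix i assume i: "i < t"
      have k: "n-t+i < n" using i t by simp
      have 1: "(Z@Y@Z)!(n-t+i) = Z!(n-t+i)" using lZ k by (simp add: nth_append)
      have 2: "Z!(n-t+i) = (X@Y)!(t+(n-t+i))" using eq k by blast
      have 3: "t+(n-t+i) = n+i" using t by simp
      have 4: "(X@Y)!(n+i) = Y!i" using lX by (simp add: nth_append)
      have 5: "n-t+t+i = n+i" using t by simp
      have 6: "(Z@Y@Z)!(n+i) = Y!i" using lZ lY t i by (simp add: nth_append)
      show "(Z@Y@Z)!(n-t+i) = (Z@Y@Z)!(n-t+t+i)" using 1 2 3 4 5 6 by simp
    qed
    then show False using sf sf_iff by blast
  next
    case True
    then have "a \<noteq> b" using abc by simp
    have "[b,a,b] \<in> sf_words 3" using abc \<open>a \<noteq> b\<close> by (intro sf3) auto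
    then have sf: "square_free (X@Z@X)" using bt_tri Z X by blast
    have "sqpos (X@Z@X) t (n-t)"
      unfolding sqpos_def
    proof (intro conjI allI impI)
      show "0 < n - t" using t by simp
      show "t + 2 * (n-t) \<le> length (X@Z@X)" using lZ lX t by simp
    next
      fix i assume i: "i < n - t"
      have k: "t+i < n" using i t by simp
      have 1: "(X@Z@X)!(t+i) = X!(t+i)" using lX k by (simp add: nth_append)
      have 2: "(X@Y)!(t+i) = X!(t+i)" using lX k by (simp add: nth_append)
      have 3: "Z!i = (X@Y)!(t+i)" using eq i by simp
      have 5: "t+(n-t)+i = n+i" using t by simp
      have 6: "(X@Z@X)!(n+i) = Z!i" using lZ lX k by (simp add: nth_append)
      show "(X@Z@X)!(t+i) = (X@Z@X)!(t+(n-t)+i)" using 1 2 3 5 6 by simp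
    qed
    then show False using sf sf_iff by blast
  qed
qed

end

lemma nowin:
  fixes n p L :: nat
  assumes n: "0 < n" and A: "\<not>(\<exists>j. p \<le> j*n \<and> j*n+n \<le> p+L)"
    and B: "\<not>(\<exists>j. p+L \<le> j*n \<and> j*n+n \<le> p+2*L)"
  shows "\<exists>q. q*n \<le> p \<and> p+2*L \<le> (q+3)*n"
proof -
  define q where "q = p div n"
  define r where "r = p mod n"
  have p: "p = q*n + r" unfolding q_def r_def by simp
  have r: "r < n" unfolding r_def using n by simp
  have "p \<le> (q+1)*n" using p r by simp
  with A have 1: "p+L < (q+1)*n + n" by (metis not_le)
  define k where "k = (p+L) div n"
  define s where "s = (p+L) mod n"
  have pl: "p+L = k*n + s" unfolding k_def s_def by simp
  have s: "s < n" unfolding s_def using n by simp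
  have "k*n < (q+2)*n" using 1 pl by (simp add: algebra_simps)
  then have "k < q+2" by (meson mult_less_cancel2)
  then have k2: "(k+2)*n \<le> (q+3)*n" by (intro mult_le_mono1) simp
  have "p+L \<le> (k+1)*n" using pl s by simp
  with B have "p+2*L < (k+1)*n+n" by (metis not_le)
  then have "p+2*L \<le> (q+3)*n" using k2 by (simp add: algebra_simps)
  moreover have "q*n \<le> p" using p by simp
  ultimately show ?thesis by blast
qed

context fixes n B m w W
  assumes bt: "brinkhuis_triple_pair n B" and wsf: "w \<in> sf_words m"
    and WB: "\<forall>j<m. W j \<in> B (w!j)"
begin

definition T where "T = concat (map W [0..<m])"

lemma lw: "length w = m" and wset: "set w \<subseteq> {0,1,2}" and wsq: "square_free w"
  using wsf by (auto simp: sf_words_def)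

lemma wl: "j < m \<Longrightarrow> w!j \<in> {0,1,2}"
  using wset lw nth_mem by blast

lemma lenW: "j < m \<Longrightarrow> length (W j) = n"
  using bt_sub[OF bt wl WB[rule_format]] by blast

lemma lenT: "length T = m*n"
  unfolding T_def using lenW by (intro concat_len) auto

lemma Tnth: "j < m \<Longrightarrow> i < n \<Longrightarrow> T!(j*n+i) = W j ! i"
  unfolding T_def using lenW by (intro concat_nth) auto

lemma wadj: "j+1 < m \<Longrightarrow> w!j \<noteq> w!(j+1)"
proof
  assume "j+1 < m" "w!j = w!(j+1)"
  then have "sqpos w j 1" using lw by (auto simp: sqpos_def)
  then show False using wsq sf_iff by blast
qed

lemma blk_eq: assumes "j < m" "k < m" "\<forall>i<n. T!(j*n+i) = T!(k*n+i)" shows "w!j = w!k"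
proof (rule ccontr)
  assume ne: "w!j \<noteq> w!k"
  have "W j = W k"
    by (rule nth_equalityI) (use assms lenW Tnth in auto)
  then show False using disj[OF bt wl[OF assms(1)] wl[OF assms(2)] ne] WB assms by metis
qed

lemma tw: assumes "k+1 < m" "i < 2*n" shows "(W k @ W (k+1))!i = T!(k*n+i)"
proof (cases "i < n")
  case True
  then show ?thesis using assms lenW Tnth by (simp add: nth_append)
next
  case False
  have "(W k @ W (k+1))!i = W (k+1) ! (i-n)" using False assms lenW by (simp add: nth_append)
  also have "\<dots> = T!((k+1)*n + (i-n))" using assms False by (intro Tnth[symmetric]) auto
  also have "(k+1)*n + (i-n) = k*n+i" using False by simp
  finally show ?thesis .
qed

lemma occ: assumes j: "j < m" and s: "s+n \<le> m*n" and eq: "\<forall>i<n. T!(j*n+i) = T!(s+i)"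
  shows "s mod n = 0"
proof (rule ccontr)
  assume t0: "s mod n \<noteq> 0"
  define t where "t = s mod n"
  define k where "k = s div n"
  have n: "0 < n" using n_pos[OF bt] .
  have sk: "s = k*n + t" unfolding t_def k_def by simp
  have t: "0 < t" "t < n" using t0 n unfolding t_def by auto
  have "(k+1)*n < m*n" using s sk t by (simp add: algebra_simps)
  then have k: "k+1 < m" by (meson mult_less_cancel2)
  have "\<forall>i<n. W j ! i = (W k @ W (k+1))!(t+i)"
  proof (intro allI impI)
    fix i assume i: "i < n"
    have "W j ! i = T!(j*n+i)" using Tnth j i by simp
    also have "\<dots> = T!(s+i)" using eq i by simp
    also have "\<dots> = T!(k*n+(t+i))" using sk by (simp add: add.assoc)
    also have "\<dots> = (W k @ W (k+1))!(t+i)" using tw k i t by simp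
    finally show "W j ! i = (W k @ W (k+1))!(t+i)" .
  qed
  then show False
    using sync[OF bt wl[OF j] wl wl wadj[OF k] WB[rule_format, OF j] WB[rule_format] WB[rule_format] t] k
    by auto
qed

lemma shiftT: assumes "sqpos T p L" "p \<le> x" "x < p+L" shows "T!x = T!(x+L)"
proof -
  have "\<forall>i<L. T!(p+i) = T!(p+L+i)" using assms(1) by (simp add: sqpos_def)
  moreover have "x - p < L" using assms by simp
  ultimately have "T!(p+(x-p)) = T!(p+L+(x-p))" by blast
  moreover have "p+(x-p) = x" "p+L+(x-p) = x+L" using assms by simp_all
  ultimately show ?thesis by simp
qed

lemma window: assumes q: "q+3 \<le> m" "q*n \<le> p" "p+2*L \<le> (q+3)*n" and sq: "sqpos T p L"
  shows False
proof -
  have tri: "[w!q, w!(q+1), w!(q+2)] \<in> sf_words 3"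
    using q wl wadj[of q] wadj[of "q+1"] by (intro sf3) (auto simp: add.assoc)
  define Y where "Y = W q @ W (q+1) @ W (q+2)"
  have sf: "square_free Y" unfolding Y_def using bt_tri[OF bt tri] WB q by auto
  have lY: "length Y = 3*n" unfolding Y_def using lenW q by simp
  have Yn: "Y!k = T!(q*n+k)" if k: "k < 3*n" for k
  proof -
    consider "k < n" | "n \<le> k" "k < 2*n" | "2*n \<le> k" by linarith
    then show ?thesis
    proof cases
      case 1 then show ?thesis unfolding Y_def using lenW q Tnth by (simp add: nth_append)
    next
      case 2
      have "k - n < n" using 2 by simp
      then have "Y!k = W (q+1) ! (k-n)" unfolding Y_def using 2 lenW q by (simp add: nth_append)
      also have "\<dots> = T!((q+1)*n + (k-n))" using 2 q by (intro Tnth[symmetric]) auto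
      also have "(q+1)*n + (k-n) = q*n+k" using 2 by simp
      finally show ?thesis .
    next
      case 3
      have "k - n - n = k - 2*n" by simp
      moreover have "\<not> k - n < n" using 3 by simp
      ultimately have "Y!k = W (q+2) ! (k-2*n)" unfolding Y_def using 3 lenW q by (simp add: nth_append)
      also have "\<dots> = T!((q+2)*n + (k-2*n))" using 3 q k by (intro Tnth[symmetric]) auto
      also have "(q+2)*n + (k-2*n) = q*n+k" using 3 by (simp add: algebra_simps)
      finally show ?thesis .
    qed
  qed
  have L: "0 < L" and eq: "\<forall>i<L. T!(p+i) = T!(p+L+i)" using sq by (auto simp: sqpos_def)
  have "sqpos Y (p - q*n) L"
    unfolding sqpos_def
  proof (intro conjI allI impI)
    show "0 < L" by fact
    show "p - q*n + 2*L \<le> length Y" using lY q by (simp add: algebra_simps)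
  next
    fix i assume i: "i < L"
    have "Y!(p - q*n + i) = T!(q*n + (p - q*n + i))" using q i by (intro Yn) (simp add: algebra_simps)
    also have "\<dots> = T!(p+i)" using q by simp
    also have "\<dots> = T!(p+L+i)" using eq i by simp
    also have "\<dots> = T!(q*n + (p - q*n + L + i))" using q by simp
    also have "\<dots> = Y!(p - q*n + L + i)" using q i by (intro Yn[symmetric]) (simp add: algebra_simps)
    finally show "Y!(p - q*n + i) = Y!(p - q*n + L + i)" .
  qed
  then show False using sf sf_iff by blast
qed


lemma aligned: assumes sq: "sqpos T p L" and Ll: "L = l*n" shows False
proof -
  have n: "0 < n" using n_pos[OF bt] .
  have L: "0 < L" and bnd: "p + 2*L \<le> m*n" using sq lenT by (auto simp: sqpos_def)
  have l: "0 < l" using L Ll by simp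
  define q where "q = p div n"
  define r where "r = p mod n"
  have p: "p = q*n + r" unfolding q_def r_def by simp
  have r: "r < n" unfolding r_def using n by simp
  have blk: "w!j = w!(j+l)" if j: "p \<le> j*n" "j*n+n \<le> p+L" for j
  proof -
    have "(j+l+1)*n \<le> m*n" using j bnd Ll by (simp add: algebra_simps)
    then have jm: "j+l < m" using n by (simp only: mult_le_cancel2) simp
    show ?thesis
    proof (rule blk_eq)
      show "j < m" "j + l < m" using jm by simp_all
      show "\<forall>i<n. T!(j*n+i) = T!((j+l)*n+i)"
      proof (intro allI impI)
        fix i assume i: "i < n"
        have "T!(j*n+i) = T!(j*n+i+L)" using j i by (intro shiftT[OF sq]) auto
        also have "j*n+i+L = (j+l)*n+i" using Ll by (simp add: algebra_simps)
        finally show "T!(j*n+i) = T!((j+l)*n+i)" .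
      qed
    qed
  qed
  show False
  proof (cases "r = 0")
    case True
    have "sqpos w q l"
      unfolding sqpos_def
    proof (intro conjI allI impI)
      show "0 < l" by fact
      have "(q+2*l)*n \<le> m*n" using bnd p True Ll by (simp add: algebra_simps)
      then show "q + 2*l \<le> length w" using n lw by simp
    next
      fix i assume i: "i < l"
      have "(q+i+1)*n \<le> (q+l)*n" using i by (intro mult_le_mono1) simp
      then have "w!(q+i) = w!(q+i+l)" using p True Ll by (intro blk) (auto simp: algebra_simps)
      then show "w!(q+i) = w!(q+l+i)" by (simp add: algebra_simps)
    qed
    then show False using wsq sf_iff by blast
  next
    case False
    then have r0: "0 < r" by simp
    have "(q+2*l)*n < m*n" using bnd p r0 Ll by (simp add: algebra_simps)
    then have qm: "q+2*l < m" by (meson mult_less_cancel2)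
    have inner: "w!(q+i) = w!(q+i+l)" if i: "1 \<le> i" "i < l" for i
    proof (rule blk)
      have "n \<le> i*n" using i by simp
      then have "r \<le> i*n" using r by linarith
      then show "p \<le> (q+i)*n" using p by (simp add: algebra_simps)
      have "(q+i+1)*n \<le> (q+l)*n" using i by (intro mult_le_mono1) simp
      then show "(q+i)*n + n \<le> p+L" using p Ll by (simp add: algebra_simps)
    qed
    consider "w!q = w!(q+l)" | "w!(q+l) = w!(q+2*l)" | "w!q \<noteq> w!(q+l)" "w!(q+l) \<noteq> w!(q+2*l)" by blast
    then show False
    proof cases
      case 1
      have "sqpos w q l"
        unfolding sqpos_def
      proof (intro conjI allI impI)
        show "0 < l" by fact
        show "q + 2*l \<le> length w" using qm lw by simp
      next
        fix i assume i: "i < l"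
        show "w!(q+i) = w!(q+l+i)"
        proof (cases "i = 0")
          case True then show ?thesis using 1 by simp
        next
          case False then show ?thesis using inner[of i] i by (simp add: algebra_simps)
        qed
      qed
      then show False using wsq sf_iff by blast
    next
      case 2
      have "sqpos w (q+1) l"
        unfolding sqpos_def
      proof (intro conjI allI impI)
        show "0 < l" by fact
        show "q + 1 + 2*l \<le> length w" using qm lw by simp
      next
        fix i assume i: "i < l"
        show "w!(q+1+i) = w!(q+1+l+i)"
        proof (cases "i+1 < l")
          case True then show ?thesis using inner[of "i+1"] by (simp add: algebra_simps)
        next
          case False
          then have e1: "q+1+i = q+l" and e2: "q+1+l+i = q+2*l" using i by simp_all
          show ?thesis unfolding e1 e2 by (rule 2)
        qed
      qed
      then show False using wsq sf_iff by blast
    next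
      case 3
      have tri: "[w!q, w!(q+l), w!(q+2*l)] \<in> sf_words 3"
        using 3 qm wl by (intro sf3) auto
      define Y where "Y = W q @ W (q+l) @ W (q+2*l)"
      have sf: "square_free Y" unfolding Y_def using bt_tri[OF bt tri] WB qm by auto
      have lY: "length Y = 3*n" unfolding Y_def using lenW qm by simp
      have Y1: "Y!k = T!(q*n+k)" if k: "k < n" for k
        unfolding Y_def using lenW qm Tnth k by (simp add: nth_append)
      have Y2: "Y!(n+k) = T!((q+l)*n+k)" if k: "k < n" for k
        unfolding Y_def using lenW qm Tnth k by (simp add: nth_append)
      have Y3: "Y!(2*n+k) = T!((q+2*l)*n+k)" if k: "k < n" for k
      proof -
        have "Y!(2*n+k) = W (q+2*l) ! k" unfolding Y_def using lenW qm k by (simp add: nth_append)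
        then show ?thesis using Tnth qm k by simp
      qed
      have "sqpos Y r n"
        unfolding sqpos_def
      proof (intro conjI allI impI)
        show "0 < n" by fact
        show "r + 2*n \<le> length Y" using lY r by simp
      next
        fix i assume i: "i < n"
        show "Y!(r+i) = Y!(r+n+i)"
        proof (cases "r+i < n")
          case True
          have "Y!(r+i) = T!(p+i)" using Y1[OF True] p by (simp add: add.assoc)
          also have "\<dots> = T!(p+i+L)"
          proof (rule shiftT[OF sq])
            have "n \<le> l*n" using l by simp
            then show "p + i < p + L" using i Ll by linarith
          qed simp
          also have "\<dots> = Y!(n+(r+i))" using Y2[OF True] p Ll by (simp add: algebra_simps)
          finally show ?thesis by (simp add: algebra_simps)
        next
          case False
          define k where "k = r+i-n"
          have k: "k < n" "r + i = n + k" using False i r unfolding k_def by auto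
          have "(q+1)*n \<le> (q+l)*n" using l by (intro mult_le_mono1) simp
          moreover have "p \<le> (q+1)*n" using p r by simp
          ultimately have x1: "p \<le> (q+l)*n+k" by simp
          have x2: "(q+l)*n+k < p+L" using p k Ll i by (simp add: algebra_simps)
          have "Y!(r+i) = T!((q+l)*n+k)" using Y2[OF k(1)] k by simp
          also have "\<dots> = T!((q+l)*n+k+L)" using x1 x2 by (intro shiftT[OF sq])
          also have "(q+l)*n+k+L = (q+2*l)*n+k" using Ll by (simp add: algebra_simps)
          also have "T!((q+2*l)*n+k) = Y!(2*n+k)" using Y3[OF k(1)] by simp
          finally have "Y!(r+i) = Y!(2*n+k)" .
          moreover have e: "r+n+i = 2*n+k" using k by simp
          ultimately show ?thesis by (simp only: e)
        qed
      qed
      then show False using sf sf_iff by blast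
    qed
  qed
qed

theorem main: assumes m: "3 \<le> m" shows "square_free T"
proof (rule ccontr)
  assume "\<not> square_free T"
  then obtain p L where sq: "sqpos T p L" using sf_iff by blast
  have n: "0 < n" using n_pos[OF bt] .
  have L: "0 < L" and bnd: "p + 2*L \<le> m*n" using sq lenT by (auto simp: sqpos_def)
  show False
  proof (cases "\<exists>j. p \<le> j*n \<and> j*n+n \<le> p+L")
    case True
    then obtain j where j: "p \<le> j*n" "j*n+n \<le> p+L" by blast
    have "(j+1)*n \<le> m*n" using j bnd by simp
    then have jm: "j < m" using n by (simp only: mult_le_cancel2) simp
    have "(j*n+L) mod n = 0"
    proof (rule occ[OF jm])
      show "j*n+L+n \<le> m*n" using j bnd by simp
      show "\<forall>i<n. T!(j*n+i) = T!(j*n+L+i)"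
        using shiftT[OF sq] j by (auto simp: algebra_simps)
    qed
    then have "L mod n = 0" by simp
    then have "L = (L div n)*n" by (metis div_mult_mod_eq add_0_right)
    then show False using aligned[OF sq] by blast
  next
    case nA: False
    show False
    proof (cases "\<exists>j. p+L \<le> j*n \<and> j*n+n \<le> p+2*L")
      case True
      then obtain j where j: "p+L \<le> j*n" "j*n+n \<le> p+2*L" by blast
      have "(j+1)*n \<le> m*n" using j bnd by simp
      then have jm: "j < m" using n by (simp only: mult_le_cancel2) simp
      have "(j*n-L) mod n = 0"
      proof (rule occ[OF jm])
        show "j*n-L+n \<le> m*n" using j bnd by simp
        show "\<forall>i<n. T!(j*n+i) = T!(j*n-L+i)"
        proof (intro allI impI)
          fix i assume i: "i < n"
          have "T!(j*n-L+i) = T!(j*n-L+i+L)" using j i by (intro shiftT[OF sq]) auto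
          also have "j*n-L+i+L = j*n+i" using j by simp
          finally show "T!(j*n+i) = T!(j*n-L+i)" by simp
        qed
      qed
      then have "n dvd (j*n - L)" by (simp add: dvd_eq_mod_eq_0)
      moreover have "L = j*n - (j*n - L)" using j by simp
      ultimately have "n dvd L" by (metis dvd_diff_nat dvd_triv_right)
      then obtain l where "L = l*n" by (metis dvd_def mult.commute)
      then show False using aligned[OF sq] by blast
    next
      case False
      obtain q where q: "q*n \<le> p" "p+2*L \<le> (q+3)*n" using nowin[OF n nA False] by blast
      define q' where "q' = min q (m-3)"
      have "q' \<le> q" unfolding q'_def by simp
      then have "q'*n \<le> q*n" by (rule mult_le_mono1)
      then have 1: "q'*n \<le> p" using q(1) by (rule le_trans)
      have 2: "p+2*L \<le> (q'+3)*n"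
      proof (cases "q \<le> m-3")
        case True then show ?thesis using q unfolding q'_def by simp
      next
        case False then have "q' + 3 = m" unfolding q'_def using m by simp
        then show ?thesis using bnd by simp
      qed
      have "q'+3 \<le> m" unfolding q'_def using m by simp
      then show False using window 1 2 sq by blast
    qed
  qed
qed

end

lemma brink: "brinkhuis_triple_pair n B \<Longrightarrow> w \<in> sf_words m \<Longrightarrow> \<forall>j<m. W j \<in> B (w!j) \<Longrightarrow> 3 \<le> m
  \<Longrightarrow> square_free (concat (map W [0..<m]))"
  using main T_def by metis

lemma fin_sf: "finite (sf_words k)"
proof (rule finite_subset)
  show "sf_words k \<subseteq> {xs. set xs \<subseteq> {0,1,2} \<and> length xs = k}" by (auto simp: sf_words_def)
  show "finite {xs. set xs \<subseteq> {0,1,2::nat} \<and> length xs = k}" by (rule finite_lists_length_eq) simp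
qed

lemma take_sf: assumes "w \<in> sf_words K" "k \<le> K" shows "take k w \<in> sf_words k"
proof -
  have "\<not> sqpos (take k w) p L" for p L
  proof
    assume "sqpos (take k w) p L"
    then have "sqpos w p L" unfolding sqpos_def by auto
    then show False using assms sf_iff by (auto simp: sf_words_def)
  qed
  moreover have "set (take k w) \<subseteq> {0,1,2}" using assms set_take_subset by (fastforce simp: sf_words_def)
  ultimately show ?thesis using assms by (auto simp: sf_words_def sf_iff)
qed

lemma drop_sf: assumes "w \<in> sf_words (j+k)" shows "drop j w \<in> sf_words k"
proof -
  have "\<not> sqpos (drop j w) p L" for p L
  proof
    assume "sqpos (drop j w) p L"
    then have "sqpos w (j+p) L" unfolding sqpos_def using assms
      by (auto simp: sf_words_def algebra_simps)
    then show False using assms sf_iff by (auto simp: sf_words_def)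
  qed
  moreover have "set (drop j w) \<subseteq> {0,1,2}" using assms set_drop_subset by (fastforce simp: sf_words_def)
  ultimately show ?thesis using assms by (auto simp: sf_words_def sf_iff)
qed

lemma submult: "sf_count (j+k) \<le> sf_count j * sf_count k"
proof -
  have "inj_on (\<lambda>w. (take j w, drop j w)) (sf_words (j+k))"
    by (rule inj_onI) (metis append_take_drop_id prod.inject)
  moreover have "(\<lambda>w. (take j w, drop j w)) ` sf_words (j+k) \<subseteq> sf_words j \<times> sf_words k"
    using take_sf drop_sf by auto
  moreover have "finite (sf_words j \<times> sf_words k)" using fin_sf by simp
  ultimately have "card (sf_words (j+k)) \<le> card (sf_words j \<times> sf_words k)"
    by (rule card_inj_on_le)
  then show ?thesis unfolding sf_count_def by (simp add: card_cartesian_product)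
qed

lemma count: assumes bt: "brinkhuis_triple_pair n B" and m: "3 \<le> m"
  shows "2^m * sf_count m \<le> sf_count (m*n)"
proof -
  have "\<forall>i\<in>{0,1,2::nat}. \<exists>xy. B i = {fst xy, snd xy} \<and> fst xy \<noteq> snd xy"
    using bt_card[OF bt] card_2_iff by (metis fst_conv snd_conv)
  then obtain f where f: "\<forall>i\<in>{0,1,2::nat}. B i = {fst (f i), snd (f i)} \<and> fst (f i) \<noteq> snd (f i)"
    by metis
  define U where "U i = fst (f i)" for i
  define V where "V i = snd (f i)" for i
  have UV: "\<And>i. i \<in> {0,1,2} \<Longrightarrow> B i = {U i, V i} \<and> U i \<noteq> V i" using f U_def V_def by auto
  define Wf where "Wf = (\<lambda>(w::nat list) (cs::bool list) j. if cs!j then U (w!j) else V (w!j))"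
  define F where "F = (\<lambda>(w, cs). concat (map (Wf w cs) [0..<m]))"
  define D where "D = sf_words m \<times> {cs::bool list. set cs \<subseteq> UNIV \<and> length cs = m}"
  have wl: "w!j \<in> {0,1,2}" if "w \<in> sf_words m" "j < m" for w j
    using that nth_mem by (fastforce simp: sf_words_def)
  have WfB: "Wf w cs j \<in> B (w!j)" if "w \<in> sf_words m" "j < m" for w cs j
    using UV[OF wl[OF that]] unfolding Wf_def by auto
  have lWf: "length (Wf w cs j) = n" if "w \<in> sf_words m" "j < m" for w cs j
    using bt_sub[OF bt wl[OF that] WfB[OF that]] by blast
  have cb: "card {cs::bool list. length cs = m} = 2^m"
    using card_lists_length_eq[of "UNIV::bool set" m] by simp
  have cD: "card D = sf_count m * 2^m"
    unfolding D_def sf_count_def using cb by (simp add: card_cartesian_product)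
  have img: "F ` D \<subseteq> sf_words (m*n)"
  proof
    fix T assume "T \<in> F ` D"
    then obtain w cs where wc: "w \<in> sf_words m" "T = concat (map (Wf w cs) [0..<m])"
      unfolding F_def D_def by auto
    have "square_free T" using brink[OF bt wc(1) _ m, of "Wf w cs"] WfB[OF wc(1)] wc(2) by auto
    moreover have "length T = m*n" using wc lWf by (simp add: concat_len)
    moreover have "set T \<subseteq> {0,1,2}"
    proof
      fix x assume "x \<in> set T"
      then obtain a where a: "a < m" "x \<in> set (Wf w cs a)" using wc by auto
      then show "x \<in> {0,1,2}" using bt_sub[OF bt wl[OF wc(1) a(1)] WfB[OF wc(1) a(1)]] by blast
    qed
    ultimately show "T \<in> sf_words (m*n)" by (simp add: sf_words_def)
  qed
  have inj: "inj_on F D"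
  proof (rule inj_onI)
    fix x y assume x: "x \<in> D" and y: "y \<in> D" and e: "F x = F y"
    obtain w cs where xw: "x = (w, cs)" "w \<in> sf_words m" "length cs = m" using x D_def by auto
    obtain w' cs' where yw: "y = (w', cs')" "w' \<in> sf_words m" "length cs' = m" using y D_def by auto
    have e2: "concat (map (Wf w cs) [0..<m]) = concat (map (Wf w' cs') [0..<m])"
      using e xw yw unfolding F_def by simp
    have bj: "Wf w cs j = Wf w' cs' j" if j: "j < m" for j
    proof (rule nth_equalityI)
      show "length (Wf w cs j) = length (Wf w' cs' j)" using lWf xw yw j by simp
      fix i assume "i < length (Wf w cs j)"
      then have i: "i < n" using lWf xw j by simp
      have "Wf w cs j ! i = concat (map (Wf w cs) [0..<m]) ! (j*n+i)"
        using concat_nth[of m "Wf w cs" n j i] lWf[OF xw(2)] j i by simp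
      also have "\<dots> = concat (map (Wf w' cs') [0..<m]) ! (j*n+i)" using e2 by simp
      also have "\<dots> = Wf w' cs' j ! i"
        using concat_nth[of m "Wf w' cs'" n j i] lWf[OF yw(2)] j i by simp
      finally show "Wf w cs j ! i = Wf w' cs' j ! i" .
    qed
    have wj: "w!j = w'!j" if j: "j < m" for j
    proof (rule ccontr)
      assume "w!j \<noteq> w'!j"
      then show False using disj[OF bt wl[OF xw(2) j] wl[OF yw(2) j]] WfB[OF xw(2) j, of cs]
          WfB[OF yw(2) j, of cs'] bj[OF j] by metis
    qed
    have cj: "cs!j = cs'!j" if j: "j < m" for j
    proof (rule ccontr)
      assume ne: "cs!j \<noteq> cs'!j"
      have "U (w!j) \<noteq> V (w!j)" using UV[OF wl[OF xw(2) j]] by simp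
      then show False using bj[OF j] wj[OF j] ne unfolding Wf_def by (cases "cs!j") auto
    qed
    have "w = w'" using wj xw yw by (intro nth_equalityI) (auto simp: sf_words_def)
    moreover have "cs = cs'" using cj xw yw by (intro nth_equalityI) auto
    ultimately show "x = y" using xw yw by simp
  qed
  have "card D \<le> card (sf_words (m*n))"
    using card_inj_on_le[OF inj img fin_sf] .
  then show ?thesis using cD unfolding sf_count_def by (simp add: mult.commute)
qed

lemma n_ge2: assumes bt: "brinkhuis_triple_pair n B" shows "2 \<le> n"
proof (rule ccontr)
  assume "\<not> 2 \<le> n"
  with n_pos[OF bt] have n1: "n = 1" by simp
  have fin: "finite (B i)" if "i \<in> {0,1,2}" for i
    using bt_card[OF bt that] by (metis card.infinite zero_neq_numeral)
  have "B 0 \<inter> B 1 = {}" using disj[OF bt, of 0 1] by auto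
  then have c4: "card (B 0 \<union> B 1) = 4" using fin bt_card[OF bt] by (simp add: card_Un_disjoint)
  have sub1: "sf_words 1 \<subseteq> {[0],[1],[2]}"
  proof
    fix w assume "w \<in> sf_words 1"
    then have "length w = 1" "set w \<subseteq> {0,1,2}" by (auto simp: sf_words_def)
    then obtain x where "w = [x]" "x \<in> {0,1,2}" by (metis One_nat_def length_0_conv length_Suc_conv list.set_intros(1) subsetD)
    then show "w \<in> {[0],[1],[2]}" by auto
  qed
  have "B 0 \<union> B 1 \<subseteq> sf_words 1" using bt_sub[OF bt, of 0] bt_sub[OF bt, of 1] n1
    unfolding sf_words_def by auto
  then have "B 0 \<union> B 1 \<subseteq> {[0],[1],[2]}" using sub1 by (rule subset_trans)
  then have "card (B 0 \<union> B 1) \<le> card {[0::nat],[1],[2]}" by (intro card_mono) auto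
  also have "\<dots> \<le> 3" by (simp add: card_insert_le_m1)
  finally show False using c4 by simp
qed

lemma pos: assumes bt: "brinkhuis_triple_pair n B" shows "1 \<le> sf_count k"
proof -
  have ne: "1 \<le> sf_count j" if "sf_words j \<noteq> {}" for j
    using that fin_sf[of j] unfolding sf_count_def by (simp add: Suc_le_eq card_gt_0_iff)
  have n: "0 < n" using n_pos[OF bt] .
  have p3: "sf_words (3*n^j) \<noteq> {}" for j
  proof (induction j)
    case 0
    have "[0,1,2] \<in> sf_words 3" by (intro sf3) auto
    then show ?case by auto
  next
    case (Suc j)
    have "1 \<le> n^j" using n by simp
    then have m3: "3 \<le> 3*n^j" by simp
    have c: "2^(3*n^j) * sf_count (3*n^j) \<le> sf_count (3*n^j*n)" by (rule count[OF bt m3])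
    have c1: "1 \<le> sf_count (3*n^j)" using ne Suc.IH by blast
    have "1*1 \<le> 2^(3*n^j) * sf_count (3*n^j)" using c1 by (intro mult_le_mono) auto
    then have "1 \<le> 2^(3*n^j) * sf_count (3*n^j)" by simp
    then have "1 \<le> sf_count (3*n^j*n)" using c by (rule le_trans)
    then have "sf_words (3*n^j*n) \<noteq> {}" unfolding sf_count_def by auto
    moreover have "3*n^(Suc j) = 3*n^j*n" by (simp add: algebra_simps)
    ultimately show ?case by metis
  qed
  have "k < 2^k" by (rule less_exp)
  also have "(2::nat)^k \<le> n^k" using n_ge2[OF bt] by (intro power_mono) auto
  finally have kk: "k \<le> 3*n^k" by simp
  obtain w where "w \<in> sf_words (3*n^k)" using p3 by blast
  then have "take k w \<in> sf_words k" using take_sf kk by blast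
  then show ?thesis using ne by blast
qed

lemma fekete:
  fixes f :: "nat \<Rightarrow> real"
  assumes nn: "\<And>k. 0 \<le> f k" and sub: "\<And>j k. f (j+k) \<le> f j + f k"
  shows "(\<lambda>N. f N / real N) \<longlonglongrightarrow> Inf ((\<lambda>k. f k / real k) ` {1..})"
proof -
  define S where "S = (\<lambda>k. f k / real k) ` {1..}"
  have Sne: "S \<noteq> {}" unfolding S_def by auto
  have bdd: "bdd_below S" unfolding S_def by (rule bdd_belowI[of _ 0]) (auto simp: nn)
  have low: "Inf S \<le> f N / real N" if "1 \<le> N" for N
    using bdd that unfolding S_def by (intro cInf_lower) auto
  have rep: "f (q*k+r) \<le> real q * f k + f r" for q k r
  proof (induction q)
    case 0 then show ?case by simp
  next
    case (Suc q)
    have "f (Suc q * k + r) = f (k + (q*k+r))" by (simp add: algebra_simps)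
    also have "\<dots> \<le> f k + f (q*k+r)" by (rule sub)
    also have "\<dots> \<le> f k + (real q * f k + f r)" using Suc.IH by simp
    finally show ?case by (simp add: algebra_simps)
  qed
  show ?thesis
    unfolding S_def[symmetric]
  proof (rule order_tendstoI)
    fix a assume a: "a < Inf S"
    show "\<forall>\<^sub>F N in sequentially. a < f N / real N"
      unfolding eventually_sequentially using a low by (meson less_le_trans)
  next
    fix a assume a: "Inf S < a"
    then obtain k where k: "1 \<le> k" "f k / real k < a"
      using cInf_less_iff[OF Sne bdd] unfolding S_def by auto
    define e where "e = a - f k / real k"
    have e: "0 < e" using k unfolding e_def by simp
    define C where "C = Max (f ` {..<k})"
    have Cr: "f r \<le> C" if "r < k" for r unfolding C_def using that by (intro Max_ge) auto
    have C0: "0 \<le> C" using Cr[of 0] nn[of 0] k by simp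
    show "\<forall>\<^sub>F N in sequentially. f N / real N < a"
      unfolding eventually_sequentially
    proof (intro exI allI impI)
      fix N assume N: "nat \<lceil>C / e\<rceil> + 1 \<le> N"
      have "C / e \<le> real (nat \<lceil>C / e\<rceil>)" by (rule real_nat_ceiling_ge)
      then have Ce: "C / e < real N" using N by linarith
      have Npos: "0 < real N" using N by simp
      have CN: "C < e * real N" using Ce e by (simp add: pos_divide_less_eq mult.commute)
      define q where "q = N div k"
      define r where "r = N mod k"
      have Nq: "N = q*k + r" unfolding q_def r_def by simp
      have r: "r < k" unfolding r_def using k by simp
      have fN: "f N \<le> real q * f k + C" using rep[of q k r] Cr[OF r] Nq by simp
      have kpos: "0 < real k" using k by simp
      have "real q * f k = real (q*k) * (f k / real k)" using kpos by simp
      also have "\<dots> \<le> real N * (f k / real k)"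
        using Nq nn[of k] kpos by (intro mult_right_mono) auto
      finally have "f N < real N * (f k / real k) + e * real N" using fN CN by linarith
      also have "\<dots> = a * real N" unfolding e_def by (simp add: algebra_simps)
      finally show "f N / real N < a" using Npos by (simp add: pos_divide_less_eq)
    qed
  qed
qed

lemma growth_lim: assumes bt: "brinkhuis_triple_pair n B"
  shows "(\<lambda>N. real (sf_count N) powr (1 / real N)) \<longlonglongrightarrow> sf_growth"
proof -
  define f where "f N = ln (real (sf_count N))" for N
  have p: "1 \<le> real (sf_count N)" for N using pos[OF bt] by simp
  have nn: "0 \<le> f k" for k unfolding f_def using p by simp
  have sub: "f (j+k) \<le> f j + f k" for j k
  proof -
    have "real (sf_count (j+k)) \<le> real (sf_count j) * real (sf_count k)"
      using submult[of j k] by (metis of_nat_le_iff of_nat_mult)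
    then have "ln (real (sf_count (j+k))) \<le> ln (real (sf_count j) * real (sf_count k))"
      using p by (intro ln_mono) (auto intro: less_le_trans[OF zero_less_one])
    also have "\<dots> = f j + f k"
    proof -
      have "0 < real (sf_count j)" "0 < real (sf_count k)" using p[of j] p[of k] by linarith+
      then show ?thesis unfolding f_def by (simp add: ln_mult)
    qed
    finally show ?thesis unfolding f_def .
  qed
  have eq: "real (sf_count N) powr (1 / real N) = exp (f N / real N)" for N
    using p[of N] unfolding f_def powr_def by auto
  have "(\<lambda>N. exp (f N / real N)) \<longlonglongrightarrow> exp (Inf ((\<lambda>k. f k / real k) ` {1..}))"
    by (intro tendsto_exp fekete nn sub)
  then have t: "(\<lambda>N. real (sf_count N) powr (1 / real N)) \<longlonglongrightarrow> exp (Inf ((\<lambda>k. f k / real k) ` {1..}))"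
    unfolding eq .
  then have "sf_growth = exp (Inf ((\<lambda>k. f k / real k) ` {1..}))"
    unfolding sf_growth_def by (rule limI)
  then show ?thesis using t by simp
qed

theorem lemma1:
  fixes n :: nat
  assumes "\<exists>B. brinkhuis_triple_pair n B"
  shows "sf_growth \<ge> 2 powr (1 / (real n - 1))"
proof -
  obtain B where bt: "brinkhuis_triple_pair n B" using assms by blast
  have n2: "2 \<le> n" using n_ge2[OF bt] .
  define x where "x N = real (sf_count N) powr (1 / real N)" for N
  define s where "s = sf_growth"
  have xl: "x \<longlonglongrightarrow> s" unfolding x_def s_def using growth_lim[OF bt] .
  have x1: "1 \<le> x N" for N unfolding x_def using pos[OF bt, of N] by (intro ge_one_powr_ge_zero) auto
  have s1: "1 \<le> s" using xl x1 by (intro LIMSEQ_le_const) auto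
  have spos: "0 < s" using s1 by simp
  have sm: "strict_mono (\<lambda>m. m*n)" using n2 by (intro strict_monoI) simp
  have yl: "(\<lambda>m. x (m*n)) \<longlonglongrightarrow> s" using LIMSEQ_subseq_LIMSEQ[OF xl sm] by (simp add: o_def)
  have zl: "(\<lambda>m. 2 powr (1/real n) * x m powr (1/real n)) \<longlonglongrightarrow> 2 powr (1/real n) * s powr (1/real n)"
    using spos by (intro tendsto_mult tendsto_const tendsto_powr xl) auto
  have ineq: "2 powr (1/real n) * x m powr (1/real n) \<le> x (m*n)" if m: "3 \<le> m" for m
  proof -
    have am: "0 \<le> real (sf_count m)" by simp
    have c: "2^m * real (sf_count m) \<le> real (sf_count (m*n))"
      using count[OF bt m] by (metis of_nat_le_iff of_nat_mult of_nat_numeral of_nat_power)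
    have mpos: "0 < real m" using m by simp
    have npos: "0 < real n" using n2 by simp
    have "(2^m * real (sf_count m)) powr (1 / real (m*n)) \<le> x (m*n)"
      unfolding x_def using c am by (intro powr_mono2) auto
    moreover have "(2^m * real (sf_count m)) powr (1 / real (m*n))
        = (2^m) powr (1 / real (m*n)) * real (sf_count m) powr (1 / real (m*n))"
      by (simp add: powr_mult)
    moreover have "((2::real)^m) powr (1 / real (m*n)) = 2 powr (1/real n)"
    proof -
      have "((2::real)^m) powr (1 / real (m*n)) = (2 powr real m) powr (1 / real (m*n))"
        by (simp add: powr_realpow)
      also have "\<dots> = 2 powr (real m * (1 / real (m*n)))" by (simp add: powr_powr)
      also have "real m * (1 / real (m*n)) = 1 / real n" using mpos by simp
      finally show ?thesis .
    qed
    moreover have "real (sf_count m) powr (1 / real (m*n)) = x m powr (1/real n)"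
      unfolding x_def by (simp add: powr_powr)
    ultimately show ?thesis by simp
  qed
  have key: "2 powr (1/real n) * s powr (1/real n) \<le> s"
    using yl zl ineq by (intro tendsto_le[OF trivial_limit_sequentially yl zl])
      (auto simp: eventually_sequentially)
  have npos: "0 < real n" using n2 by simp
  have "(2 powr (1/real n) * s powr (1/real n)) powr real n \<le> s powr real n"
    using key spos by (intro powr_mono2) auto
  moreover have "(2 powr (1/real n) * s powr (1/real n)) powr real n = 2 * s"
    using spos npos by (simp add: powr_mult powr_powr)
  moreover have "s powr real n = s * s powr (real n - 1)"
  proof -
    have "s powr (1 + (real n - 1)) = s powr 1 * s powr (real n - 1)" by (rule powr_add)
    then show ?thesis using spos by simp
  qed
  ultimately have "2 * s \<le> s * s powr (real n - 1)" by simp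
  then have two: "2 \<le> s powr (real n - 1)" using spos by simp
  have n1: "0 < real n - 1" using n2 by simp
  have "2 powr (1 / (real n - 1)) \<le> (s powr (real n - 1)) powr (1 / (real n - 1))"
    using two n1 by (intro powr_mono2) auto
  also have "\<dots> = s" using n1 spos by (simp add: powr_powr)
  finally show ?thesis unfolding s_def .
qed

end
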